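(* Let $M=\{M_\gamma\}_{\gamma\in\Gamma}$ be a defining family of functions on $\mathbb R^k$. Then for every $p\ge 1$ the space $\mathcal D(\mathbb R^k)$ of smooth compactly supported functions on $\mathbb R^k$ is dense in $\mathcal K_p(M)$.
   Context: A defining family of functions on $\mathbb R^k$ is a family $M=\{M_\gamma\}_{\gamma\in\Gamma}$ of nonnegative measurable functions on $\mathbb R^k$, each bounded on bounded subsets of $\mathbb R^k$, such that: (a) for all $\gamma_1,\gamma_2\in\Gamma$ there are $\gamma\in\Gamma$ and $C>0$ with $M_\gamma\ge C(M_{\gamma_1}+M_{\gamma_2})$; (b) there is a countable $\Gamma'\subset\Gamma$ such that for every $\gamma\in\Gamma$ there are $\gamma'\in\Gamma'$ and $C>0$ with $CM_\gamma\le M_{\gamma'}$; (c) for every $x\in\mathbb R^k$ there are $\gamma\in\Gamma$, a neighborhood $O(x)$ of $x$ and $C>0$ with $M_\gamma(x')\ge C$ for all $x'\in O(x)$. For $p\ge1$, $\mathcal K_p(M)$ is the space of all smooth functions $f$ on $\mathbb R^k$ for which the seminorms $\|f\|^p_{\gamma,m}=\left(\int_{\mathbb R^k}[M_\gamma(x)]^p\sum_{|\mu|\le m}|\partial^\mu f(x)|^p\,dx\right)^{1/p}$ are finite for all $\gamma\in\Gamma$, $m\in\mathbb Z_+$, with the topology given by these seminorms (multi-index notation: $\mu\in\mathbb Z_+^k$, $|\mu|=\mu_1+\dots+\mu_k$). *)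

theory Defs
  imports "HOL-Analysis.Analysis"
begin

text \<open>Points of R^k are vectors of type real^'n with CARD('n) = k.
  Partial derivative in the i-th coordinate direction.\<close>
definition pdiff :: "'n::finite \<Rightarrow> (real^'n \<Rightarrow> real) \<Rightarrow> (real^'n \<Rightarrow> real)" where
  "pdiff i f = (\<lambda>x. deriv (\<lambda>t. f (x + t *\<^sub>R axis i 1)) 0)"

fun pdiffs :: "'n::finite list \<Rightarrow> (real^'n \<Rightarrow> real) \<Rightarrow> (real^'n \<Rightarrow> real)" where
  "pdiffs [] f = f"
| "pdiffs (i # is) f = pdiff i (pdiffs is f)"

definition smooth_fun :: "(real^'n::finite \<Rightarrow> real) \<Rightarrow> bool" where
  "smooth_fun f \<longleftrightarrow>
     (\<forall>ds. continuous_on UNIV (pdiffs ds f) \<and>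
       (\<forall>i x. (\<lambda>t. pdiffs ds f (x + t *\<^sub>R axis i 1)) differentiable (at 0)))"

text \<open>Multi-index derivative: apply the i-th partial derivative mu i times for each
  coordinate i (in a fixed enumeration of the coordinates; for smooth functions
  the order is irrelevant).\<close>
definition coord_enum :: "'n::finite list" where
  "coord_enum = (SOME xs. distinct xs \<and> set xs = UNIV)"

definition mderiv :: "('n::finite \<Rightarrow> nat) \<Rightarrow> (real^'n \<Rightarrow> real) \<Rightarrow> (real^'n \<Rightarrow> real)" where
  "mderiv \<mu> f = foldr (\<lambda>i g. (pdiff i ^^ \<mu> i) g) coord_enum f"

definition mi_order :: "('n::finite \<Rightarrow> nat) \<Rightarrow> nat" where
  "mi_order \<mu> = (\<Sum>i\<in>UNIV. \<mu> i)"

definition seminorm_pow :: "real \<Rightarrow> (real^'n::finite \<Rightarrow> real) \<Rightarrow> nat \<Rightarrow> (real^'n \<Rightarrow> real) \<Rightarrow> ennreal" where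
  "seminorm_pow p W m f =
     (\<integral>\<^sup>+ x. ennreal ((W x) powr p * (\<Sum>\<mu>\<in>{\<mu>. mi_order \<mu> \<le> m}. \<bar>mderiv \<mu> f x\<bar> powr p)) \<partial>lborel)"

definition Kseminorm :: "real \<Rightarrow> (real^'n::finite \<Rightarrow> real) \<Rightarrow> nat \<Rightarrow> (real^'n \<Rightarrow> real) \<Rightarrow> real" where
  "Kseminorm p W m f = (enn2real (seminorm_pow p W m f)) powr (1 / p)"

definition defining_family :: "('g \<Rightarrow> real^'n::finite \<Rightarrow> real) \<Rightarrow> bool" where
  "defining_family M \<longleftrightarrow>
     (\<forall>\<gamma>. M \<gamma> \<in> borel_measurable lborel) \<and>
     (\<forall>\<gamma> x. 0 \<le> M \<gamma> x) \<and>
     (\<forall>\<gamma> S. bounded S \<longrightarrow> (\<exists>B. \<forall>x\<in>S. M \<gamma> x \<le> B)) \<and>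
     (\<forall>\<gamma>1 \<gamma>2. \<exists>\<gamma>. \<exists>C>0. \<forall>x. M \<gamma> x \<ge> C * (M \<gamma>1 x + M \<gamma>2 x)) \<and>
     (\<exists>\<Gamma>'. countable \<Gamma>' \<and> (\<forall>\<gamma>. \<exists>\<gamma>'\<in>\<Gamma>'. \<exists>C>0. \<forall>x. C * M \<gamma> x \<le> M \<gamma>' x)) \<and>
     (\<forall>x. \<exists>\<gamma> U C. open U \<and> x \<in> U \<and> C > 0 \<and> (\<forall>x'\<in>U. M \<gamma> x' \<ge> C))"

definition Kp :: "real \<Rightarrow> ('g \<Rightarrow> real^'n::finite \<Rightarrow> real) \<Rightarrow> (real^'n \<Rightarrow> real) set" where
  "Kp p M = {f. smooth_fun f \<and> (\<forall>\<gamma> m. seminorm_pow p (M \<gamma>) m f < \<infinity>)}"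

definition test_functions :: "(real^'n::finite \<Rightarrow> real) set" where
  "test_functions = {g. smooth_fun g \<and> compact (closure {x. g x \<noteq> 0})}"

end

theory Submission
  imports Defs "HOL-Computational_Algebra.Polynomial" "HOL-Library.Sublist"
begin

definition smooth1 :: "(real \<Rightarrow> real) \<Rightarrow> bool" where
  "smooth1 u \<longleftrightarrow> (\<forall>k x. ((deriv ^^ k) u has_real_derivative (deriv ^^ Suc k) u x) (at x))"

definition psi :: "real \<Rightarrow> real" where
  "psi t = (if t > 0 then exp (- (1/t)) else 0)"

definition DP :: "real poly \<Rightarrow> real \<Rightarrow> real" where
  "DP P t = (if t > 0 then poly P (1/t) * exp (- (1/t)) else 0)"

lemma poly_exp_lim: "((\<lambda>h. poly Q (1/h) * exp (- (1/h))) \<longlongrightarrow> 0) (at_right (0::real))"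
proof -
  have "((\<lambda>s. \<Sum>i\<le>degree Q. coeff Q i * (s ^ i / exp s)) \<longlongrightarrow> 0) at_top"
    by (intro tendsto_null_sum tendsto_mult_right_zero tendsto_power_div_exp_0)
  moreover have "poly Q s * exp (- s) = (\<Sum>i\<le>degree Q. coeff Q i * (s ^ i / exp s))" for s
  proof -
    have "(\<Sum>i\<le>degree Q. coeff Q i * (s ^ i / exp s)) = (\<Sum>i\<le>degree Q. coeff Q i * s ^ i) / exp s"
      by (simp add: sum_divide_distrib)
    then show ?thesis by (simp add: poly_altdef exp_minus divide_inverse)
  qed
  ultimately have l: "((\<lambda>s. poly Q s * exp (- s)) \<longlongrightarrow> 0) at_top" by simp
  have "((\<lambda>h. poly Q (inverse h) * exp (- (inverse h))) \<longlongrightarrow> 0) (at_right 0)"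
    using filterlim_compose[OF l filterlim_inverse_at_top_right] by simp
  then show ?thesis by (simp add: inverse_eq_divide)
qed

lemma DP_deriv: "(DP P has_real_derivative DP ([:0,0,1:] * (P - pderiv P)) t) (at t)"
proof (cases "t > 0")
  case True
  have "((\<lambda>t. poly P (1/t) * exp (- (1/t))) has_real_derivative
      poly (pderiv P) (1/t) * (- 1 / t^2) * exp (- (1/t)) + poly P (1/t) * (exp (- (1/t)) * (1/t^2))) (at t)"
    using True
    by (auto intro!: derivative_eq_intros DERIV_chain2[OF poly_DERIV] simp: power2_eq_square)
  moreover have "poly (pderiv P) (1/t) * (- 1 / t^2) * exp (- (1/t)) + poly P (1/t) * (exp (- (1/t)) * (1/t^2))
     = DP ([:0,0,1:] * (P - pderiv P)) t"
    using True by (simp add: DP_def algebra_simps power2_eq_square)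
  ultimately show ?thesis
    by (rule_tac has_field_derivative_transform_within_open[where S="{0<..}"]) (use True in \<open>auto simp: DP_def\<close>)
next
  case False
  show ?thesis
  proof (cases "t < 0")
    case True
    have "((\<lambda>_. 0) has_real_derivative 0) (at t)" by simp
    then have "(DP P has_real_derivative 0) (at t)"
      by (rule has_field_derivative_transform_within_open[where S="{..<0}"]) (use True in \<open>auto simp: DP_def\<close>)
    then show ?thesis using True by (simp add: DP_def)
  next
    case False
    with \<open>\<not> t > 0\<close> have t: "t = 0" by simp
    have "((\<lambda>y. (DP P y - DP P 0) / (y - 0)) \<longlongrightarrow> 0) (at 0)"
      unfolding filterlim_at_split
    proof
      show "((\<lambda>y. (DP P y - DP P 0) / (y - 0)) \<longlongrightarrow> 0) (at_left 0)"
        by (rule tendsto_eventually, rule eventually_mono[OF eventually_at_left_real[of "-1" "0::real"]]) (auto simp: DP_def)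
    next
      have "((\<lambda>h. poly (pCons 0 P) (1/h) * exp (- (1/h))) \<longlongrightarrow> 0) (at_right 0)" by (rule poly_exp_lim)
      moreover have "\<forall>\<^sub>F y in at_right 0. poly (pCons 0 P) (1/y) * exp (- (1/y)) = (DP P y - DP P 0) / (y - 0)"
        by (auto simp: DP_def eventually_at_right_real[of 0 1] intro!: eventually_mono[OF eventually_at_right_real[of 0 1]])
      ultimately show "((\<lambda>y. (DP P y - DP P 0) / (y - 0)) \<longlongrightarrow> 0) (at_right 0)"
        by (rule Lim_transform_eventually)
    qed
    then show ?thesis using t by (simp add: has_field_derivative_iff DP_def)
  qed
qed

lemma psi_derivs: "\<exists>P. (deriv ^^ k) psi = DP P"
proof (induction k)
  case 0
  have "psi = DP 1" by (auto simp: psi_def DP_def fun_eq_iff)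
  then show ?case by auto
next
  case (Suc k)
  then obtain P where P: "(deriv ^^ k) psi = DP P" by blast
  have "deriv (DP P) = DP ([:0,0,1:] * (P - pderiv P))"
    using DP_deriv by (auto intro!: DERIV_imp_deriv)
  then show ?case using P by auto
qed

lemma smooth1_psi: "smooth1 psi"
  unfolding smooth1_def
proof (intro allI)
  fix k x
  obtain P where P: "(deriv ^^ k) psi = DP P" using psi_derivs by blast
  have "deriv (DP P) = DP ([:0,0,1:] * (P - pderiv P))"
    using DP_deriv by (auto intro!: DERIV_imp_deriv)
  then show "((deriv ^^ k) psi has_real_derivative (deriv ^^ Suc k) psi x) (at x)"
    using P DP_deriv by simp
qed

lemma smooth1_D: "smooth1 u \<Longrightarrow> ((deriv ^^ k) u has_real_derivative (deriv ^^ Suc k) u x) (at x)"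
  by (simp add: smooth1_def)

lemma smooth1_affine_derivs:
  assumes "smooth1 u"
  shows "(deriv ^^ k) (\<lambda>t. c * u (a + b * t)) = (\<lambda>t. c * b^k * (deriv ^^ k) u (a + b * t))"
proof (induction k)
  case 0 then show ?case by simp
next
  case (Suc k)
  have "((\<lambda>t. c * b^k * (deriv ^^ k) u (a + b * t)) has_real_derivative
        c * b^k * ((deriv ^^ Suc k) u (a + b * t) * b)) (at t)" for t
    by (intro DERIV_cmult DERIV_chain2[OF smooth1_D[OF assms]]) (auto intro!: derivative_eq_intros)
  then have "deriv (\<lambda>t. c * b^k * (deriv ^^ k) u (a + b * t)) = (\<lambda>t. c * b^Suc k * (deriv ^^ Suc k) u (a + b * t))"
    by (auto intro!: DERIV_imp_deriv simp: fun_eq_iff algebra_simps)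
  then show ?case using Suc by simp
qed

lemma smooth1_affine:
  assumes "smooth1 u"
  shows "smooth1 (\<lambda>t. c * u (a + b * t))"
  unfolding smooth1_def smooth1_affine_derivs[OF assms]
proof (intro allI)
  fix k x
  show "((\<lambda>t. c * b ^ k * (deriv ^^ k) u (a + b * t)) has_real_derivative
         c * b ^ Suc k * (deriv ^^ Suc k) u (a + b * x)) (at x)"
  proof -
    have d: "((\<lambda>t. a + b * t) has_real_derivative b) (at x)" by (auto intro!: derivative_eq_intros)
    have "((\<lambda>t. c * b ^ k * (deriv ^^ k) u (a + b * t)) has_real_derivative
         c * b ^ k * ((deriv ^^ Suc k) u (a + b * x) * b)) (at x)"
      by (rule DERIV_cmult, rule DERIV_chain2[OF smooth1_D[OF assms] d])
    then show ?thesis by (simp add: algebra_simps)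
  qed
qed

definition prodsum :: "((real \<Rightarrow> real) \<times> (real \<Rightarrow> real)) list \<Rightarrow> real \<Rightarrow> real" where
  "prodsum L x = sum_list (map (\<lambda>(f,g). f x * g x) L)"

definition DL :: "((real \<Rightarrow> real) \<times> (real \<Rightarrow> real)) list \<Rightarrow> ((real \<Rightarrow> real) \<times> (real \<Rightarrow> real)) list" where
  "DL L = concat (map (\<lambda>(f,g). [(deriv f, g), (f, deriv g)]) L)"

lemma smooth1_deriv: "smooth1 u \<Longrightarrow> smooth1 (deriv u)"
  unfolding smooth1_def by (metis comp_apply funpow_Suc_right)

lemma smooth1_has_deriv: "smooth1 u \<Longrightarrow> (u has_real_derivative deriv u x) (at x)"
  using smooth1_D[of u 0 x] by simp

lemma prodsum_deriv:
  assumes "\<forall>(f,g)\<in>set L. smooth1 f \<and> smooth1 g"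
  shows "(prodsum L has_real_derivative prodsum (DL L) x) (at x)"
  using assms
proof (induction L)
  case Nil then show ?case by (simp add: prodsum_def DL_def)
next
  case (Cons p L)
  obtain f g where p: "p = (f,g)" by (cases p)
  have "prodsum ((f,g)#L) = (\<lambda>x. f x * g x + prodsum L x)" by (auto simp: prodsum_def fun_eq_iff)
  moreover have "prodsum (DL ((f,g)#L)) x = deriv f x * g x + f x * deriv g x + prodsum (DL L) x"
    by (simp add: prodsum_def DL_def)
  moreover have "((\<lambda>x. f x * g x + prodsum L x) has_real_derivative deriv f x * g x + f x * deriv g x + prodsum (DL L) x) (at x)"
  proof -
    have sf: "smooth1 f" "smooth1 g" using Cons.prems p by auto
    have "(prodsum L has_real_derivative prodsum (DL L) x) (at x)" using Cons by auto
    moreover have "((\<lambda>x. f x * g x) has_real_derivative deriv f x * g x + deriv g x * f x) (at x)"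
      by (intro DERIV_mult smooth1_has_deriv sf)
    ultimately have "((\<lambda>x. f x * g x + prodsum L x) has_real_derivative (deriv f x * g x + deriv g x * f x) + prodsum (DL L) x) (at x)"
      by (intro DERIV_add)
    then show ?thesis by (simp add: algebra_simps)
  qed
  ultimately show ?case using p by simp
qed

lemma DL_smooth: "\<forall>(f,g)\<in>set L. smooth1 f \<and> smooth1 g \<Longrightarrow> \<forall>(f,g)\<in>set (DL L). smooth1 f \<and> smooth1 g"
  by (auto simp: DL_def smooth1_deriv)

lemma DL_pow_smooth: "\<forall>(f,g)\<in>set ((DL ^^ k) L). smooth1 f \<and> smooth1 g"
  if "\<forall>(f,g)\<in>set L. smooth1 f \<and> smooth1 g"
proof (induction k)
  case 0 then show ?case using that by simp
next
  case (Suc k) then show ?case using DL_smooth[of "(DL ^^ k) L"] by simp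
qed

lemma prodsum_derivs:
  assumes "\<forall>(f,g)\<in>set L. smooth1 f \<and> smooth1 g"
  shows "(deriv ^^ k) (prodsum L) = prodsum ((DL ^^ k) L)"
proof (induction k)
  case 0 then show ?case by simp
next
  case (Suc k)
  have "deriv (prodsum ((DL ^^ k) L)) = prodsum (DL ((DL ^^ k) L))"
    using prodsum_deriv[OF DL_pow_smooth[OF assms, of k]] by (auto intro!: DERIV_imp_deriv)
  then show ?case using Suc by simp
qed

lemma smooth1_prodsum:
  assumes "\<forall>(f,g)\<in>set L. smooth1 f \<and> smooth1 g"
  shows "smooth1 (prodsum L)"
  unfolding smooth1_def prodsum_derivs[OF assms]
  using prodsum_deriv[OF DL_pow_smooth[OF assms]] by simp

lemma smooth1_mult:
  assumes "smooth1 f" "smooth1 g"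
  shows "smooth1 (\<lambda>x. f x * g x)"
proof -
  have "(\<lambda>x. f x * g x) = prodsum [(f,g)]" by (simp add: prodsum_def fun_eq_iff)
  then show ?thesis using smooth1_prodsum[of "[(f,g)]"] assms by simp
qed



section \<open>The 1D bump\<close>

definition vb :: "real \<Rightarrow> real" where
  "vb t = (exp 2 * psi (1 + 1 * t)) * (1 * psi (1 + (-1) * t))"

lemma smooth1_vb: "smooth1 vb"
proof -
  have "smooth1 (\<lambda>t. (exp 2 * psi (1 + 1 * t)) * (1 * psi (1 + (-1) * t)))"
    by (intro smooth1_mult smooth1_affine smooth1_psi)
  then show ?thesis unfolding vb_def[abs_def] .
qed

lemma vb_0: "vb 0 = 1"
  by (simp add: vb_def psi_def flip: exp_add)

lemma vb_zero: "\<bar>t\<bar> \<ge> 1 \<Longrightarrow> vb t = 0"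
  by (auto simp: vb_def psi_def)

lemma smooth1_cont: "smooth1 u \<Longrightarrow> continuous_on UNIV ((deriv ^^ k) u)"
  by (meson DERIV_isCont continuous_at_imp_continuous_on smooth1_D)

lemma smooth1_zero_open:
  assumes "smooth1 u" "open S" "\<And>x. x \<in> S \<Longrightarrow> u x = 0" "x \<in> S"
  shows "(deriv ^^ k) u x = 0"
  using assms(4)
proof (induction k arbitrary: x)
  case 0 then show ?case using assms(3) by simp
next
  case (Suc k)
  have "((\<lambda>_. 0) has_real_derivative 0) (at x)" by simp
  then have "((deriv ^^ k) u has_real_derivative 0) (at x)"
    by (rule has_field_derivative_transform_within_open[where S=S]) (use Suc assms(2) in auto)
  then show ?case using smooth1_D[OF assms(1), of k x] DERIV_unique by blast
qed

lemma vb_derivs_zero: "\<bar>t\<bar> > 1 \<Longrightarrow> (deriv ^^ k) vb t = 0"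
proof -
  assume t: "\<bar>t\<bar> > 1"
  have "open {t::real. \<bar>t\<bar> > 1}" 
    by (rule open_Collect_less) (auto intro: continuous_intros)
  then show ?thesis
    by (rule smooth1_zero_open[OF smooth1_vb]) (use t vb_zero in auto)
qed

lemma vb_derivs_bounded: "\<exists>B\<ge>0. \<forall>t. \<bar>(deriv ^^ k) vb t\<bar> \<le> B"
proof -
  have "compact ((deriv ^^ k) vb ` {-1..1})"
    by (rule compact_continuous_image) (meson continuous_on_subset smooth1_cont[OF smooth1_vb] subset_UNIV, simp)
  then obtain B where B: "B > 0" "\<forall>y\<in>(deriv ^^ k) vb ` {-1..1}. norm y \<le> B"
    using compact_imp_bounded bounded_pos by metis
  show ?thesis
  proof (intro exI[of _ B] conjI allI)
    fix t
    show "\<bar>(deriv ^^ k) vb t\<bar> \<le> B"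
    proof (cases "\<bar>t\<bar> > 1")
      case True then show ?thesis using vb_derivs_zero B by simp
    next
      case False then have "t \<in> {-1..1}" by auto
      then show ?thesis using B(2) by (metis image_eqI real_norm_def)
    qed
  qed (use B in auto)
qed

abbreviation lin :: "(real^'n::finite \<Rightarrow> real) \<Rightarrow> real^'n \<Rightarrow> 'n \<Rightarrow> real \<Rightarrow> real" where
  "lin g x i \<equiv> (\<lambda>t. g (x + t *\<^sub>R axis i 1))"

lemma pdiff_eq: "(lin g x i has_real_derivative D) (at 0) \<Longrightarrow> pdiff i g x = D"
  by (simp add: pdiff_def DERIV_imp_deriv)

lemma lin_has: "lin g x i differentiable (at 0) \<Longrightarrow> (lin g x i has_real_derivative pdiff i g x) (at 0)"
  using DERIV_deriv_iff_real_differentiable pdiff_def by metis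

lemma has_differentiable: "(f has_real_derivative D) (at x) \<Longrightarrow> f differentiable (at x)"
  using DERIV_deriv_iff_real_differentiable DERIV_imp_deriv by metis

lemma smooth_cont: "smooth_fun f \<Longrightarrow> continuous_on UNIV (pdiffs ds f)"
  by (simp add: smooth_fun_def)

lemma smooth_has: "smooth_fun f \<Longrightarrow> (lin (pdiffs ds f) x i has_real_derivative pdiffs (i#ds) f x) (at 0)"
  by (simp add: smooth_fun_def lin_has)

lemma smooth_meas: "smooth_fun f \<Longrightarrow> pdiffs ds f \<in> borel_measurable lborel"
  by (simp add: smooth_fun_def borel_measurable_continuous_onI)

lemma smooth_funI:
  assumes "\<And>ds. continuous_on UNIV (pdiffs ds f)"
    and "\<And>ds i x. (lin (pdiffs ds f) x i has_real_derivative pdiffs (i#ds) f x) (at 0)"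
  shows "smooth_fun f"
  using assms has_differentiable unfolding smooth_fun_def by blast

lemma axis_comp: "(x + t *\<^sub>R axis i 1) $ j = x $ j + (if j = i then t else 0)"
  by (simp add: axis_def)



definition chi :: "real^'n::finite \<Rightarrow> real" where
  "chi x = (\<Prod>j\<in>UNIV. vb (x $ j))"

lemma prod_line:
  fixes D D' :: "'n::finite \<Rightarrow> real \<Rightarrow> real"
  assumes "\<And>j y. (D j has_real_derivative D' j y) (at y)"
  shows "((\<lambda>t. \<Prod>j\<in>UNIV. D j ((x + t *\<^sub>R axis i 1) $ j)) has_real_derivative
     (\<Prod>j\<in>UNIV. if j = i then D' j (x $ j) else D j (x $ j))) (at 0)"
proof -
  have e: "(\<lambda>t. \<Prod>j\<in>UNIV. D j ((x + t *\<^sub>R axis i 1) $ j)) = (\<lambda>t. D i (x $ i + t) * (\<Prod>j\<in>UNIV-{i}. D j (x $ j)))"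
  proof
    fix t
    have "(\<Prod>j\<in>UNIV. D j ((x + t *\<^sub>R axis i 1) $ j)) = D i ((x + t *\<^sub>R axis i 1) $ i) * (\<Prod>j\<in>UNIV-{i}. D j ((x + t *\<^sub>R axis i 1) $ j))"
      by (rule prod.remove) auto
    also have "(\<Prod>j\<in>UNIV-{i}. D j ((x + t *\<^sub>R axis i 1) $ j)) = (\<Prod>j\<in>UNIV-{i}. D j (x $ j))"
      by (rule prod.cong) (auto simp: axis_def)
    finally show "(\<Prod>j\<in>UNIV. D j ((x + t *\<^sub>R axis i 1) $ j)) = D i (x $ i + t) * (\<Prod>j\<in>UNIV-{i}. D j (x $ j))"
      by (simp add: axis_comp)
  qed
  have r: "(\<Prod>j\<in>UNIV. if j = i then D' j (x $ j) else D j (x $ j)) = D' i (x $ i) * (\<Prod>j\<in>UNIV-{i}. D j (x $ j))"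
    by (subst prod.remove[of _ i]) (auto intro!: prod.cong)
  have d: "((\<lambda>t. x $ i + t) has_real_derivative 1) (at 0)" by (auto intro!: derivative_eq_intros)
  have "((\<lambda>t. D i (x $ i + t)) has_real_derivative D' i (x $ i + 0) * 1) (at 0)"
    by (rule DERIV_chain2[OF assms d])
  then have "((\<lambda>t. D i (x $ i + t) * (\<Prod>j\<in>UNIV-{i}. D j (x $ j))) has_real_derivative D' i (x $ i) * (\<Prod>j\<in>UNIV-{i}. D j (x $ j))) (at 0)"
    by (intro DERIV_cmult_right) simp
  then show ?thesis unfolding e r .
qed

lemma chi_derivs: "pdiffs a chi = (\<lambda>x. \<Prod>j\<in>UNIV. (deriv ^^ count_list a j) vb (x $ j))"
proof (induction a)
  case Nil then show ?case by (simp add: chi_def[abs_def])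
next
  case (Cons i a)
  show ?case
  proof
    fix x
    have "((\<lambda>t. \<Prod>j\<in>UNIV. (deriv ^^ count_list a j) vb ((x + t *\<^sub>R axis i 1) $ j)) has_real_derivative
     (\<Prod>j\<in>UNIV. if j = i then (deriv ^^ Suc (count_list a j)) vb (x $ j) else (deriv ^^ count_list a j) vb (x $ j))) (at 0)"
      by (rule prod_line) (rule smooth1_D[OF smooth1_vb])
    then have "pdiff i (pdiffs a chi) x = (\<Prod>j\<in>UNIV. if j = i then (deriv ^^ Suc (count_list a j)) vb (x $ j) else (deriv ^^ count_list a j) vb (x $ j))"
      using Cons by (intro pdiff_eq) simp
    also have "\<dots> = (\<Prod>j\<in>UNIV. (deriv ^^ count_list (i#a) j) vb (x $ j))"
      by (rule prod.cong) auto
    finally show "pdiffs (i # a) chi x = (\<Prod>j\<in>UNIV. (deriv ^^ count_list (i # a) j) vb (x $ j))" by simp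
  qed
qed

lemma smooth_chi: "smooth_fun (chi :: real^'n::finite \<Rightarrow> real)"
proof (rule smooth_funI)
  fix ds :: "'n list"
  show "continuous_on UNIV (pdiffs ds chi)"
    unfolding chi_derivs
    by (intro continuous_on_prod continuous_on_compose2[OF smooth1_cont[OF smooth1_vb]] continuous_intros) auto
next
  fix ds :: "'n list" and i x
  have "((\<lambda>t. \<Prod>j\<in>UNIV. (deriv ^^ count_list ds j) vb ((x + t *\<^sub>R axis i 1) $ j)) has_real_derivative
     (\<Prod>j\<in>UNIV. if j = i then (deriv ^^ Suc (count_list ds j)) vb (x $ j) else (deriv ^^ count_list ds j) vb (x $ j))) (at 0)"
    by (rule prod_line) (rule smooth1_D[OF smooth1_vb])
  moreover have "(\<Prod>j\<in>UNIV. if j = i then (deriv ^^ Suc (count_list ds j)) vb (x $ j) else (deriv ^^ count_list ds j) vb (x $ j))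
     = pdiffs (i#ds) chi x"
    unfolding chi_derivs by (rule prod.cong) auto
  ultimately show "(lin (pdiffs ds chi) x i has_real_derivative pdiffs (i # ds) chi x) (at 0)"
    unfolding chi_derivs by simp
qed

lemma chi_0: "chi 0 = 1"
  by (simp add: chi_def vb_0)

lemma chi_bounded: "\<exists>B. \<forall>x. \<bar>pdiffs a chi x\<bar> \<le> B"
proof -
  have "\<forall>k. \<exists>B\<ge>0. \<forall>t. \<bar>(deriv ^^ k) vb t\<bar> \<le> B" using vb_derivs_bounded by blast
  then obtain B where B: "\<And>k. B k \<ge> 0" "\<And>k t. \<bar>(deriv ^^ k) vb t\<bar> \<le> B k" by metis
  show ?thesis
  proof (intro exI allI)
    fix x :: "real^'a"
    have "\<bar>pdiffs a chi x\<bar> = (\<Prod>j\<in>UNIV. \<bar>(deriv ^^ count_list a j) vb (x $ j)\<bar>)"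
      by (simp add: chi_derivs abs_prod)
    also have "\<dots> \<le> (\<Prod>j\<in>UNIV. B (count_list a j))"
      by (rule prod_mono) (use B in auto)
    finally show "\<bar>pdiffs a chi x\<bar> \<le> (\<Prod>j\<in>UNIV. B (count_list a j))" .
  qed
qed

lemma chi_support: "chi x \<noteq> 0 \<Longrightarrow> \<bar>x $ j\<bar> < 1"
  unfolding chi_def using vb_zero by (metis UNIV_I linorder_not_le prod_zero_iff finite)



section \<open>Leibniz-type representation\<close>

definition TT :: "'n \<Rightarrow> ('n list \<times> 'n list) list \<Rightarrow> ('n list \<times> 'n list) list" where
  "TT i T = concat (map (\<lambda>(a,b). [(i#a, b), (a, i#b)]) T)"

definition PS :: "(real^'n::finite \<Rightarrow> real) \<Rightarrow> (real^'n \<Rightarrow> real) \<Rightarrow> ('n list \<times> 'n list) list \<Rightarrow> real^'n \<Rightarrow> real" where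
  "PS u f T x = sum_list (map (\<lambda>(a,b). pdiffs a u x * pdiffs b f x) T)"

lemma PS_Nil [simp]: "PS u f [] x = 0" by (simp add: PS_def)
lemma PS_Cons [simp]: "PS u f ((a,b)#T) x = pdiffs a u x * pdiffs b f x + PS u f T x" by (simp add: PS_def)

lemma PS_TT: "PS u f (TT i T) x = sum_list (map (\<lambda>(a,b). pdiffs (i#a) u x * pdiffs b f x + pdiffs a u x * pdiffs (i#b) f x) T)"
  by (induction T) (auto simp: TT_def PS_def)

lemma PS_line:
  assumes "smooth_fun u" "smooth_fun f"
  shows "(lin (PS u f T) x i has_real_derivative PS u f (TT i T) x) (at 0)"
proof (induction T)
  case Nil then show ?case by (simp add: TT_def)
next
  case (Cons p T)
  obtain a b where p: "p = (a,b)" by (cases p)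
  have e: "lin (PS u f (p#T)) x i = (\<lambda>t. lin (pdiffs a u) x i t * lin (pdiffs b f) x i t + lin (PS u f T) x i t)"
    by (simp add: p)
  have "((\<lambda>t. lin (pdiffs a u) x i t * lin (pdiffs b f) x i t + lin (PS u f T) x i t) has_real_derivative
     (pdiffs (i#a) u x * lin (pdiffs b f) x i 0 + pdiffs (i#b) f x * lin (pdiffs a u) x i 0) + PS u f (TT i T) x) (at 0)"
    by (intro DERIV_add DERIV_mult smooth_has assms Cons)
  moreover have "PS u f (TT i (p#T)) x = PS u f (TT i T) x + (pdiffs (i#a) u x * pdiffs b f x + pdiffs a u x * pdiffs (i#b) f x)"
    by (simp add: p PS_TT)
  ultimately show ?case unfolding e by (simp add: algebra_simps)
qed

lemma PS_cont:
  assumes "smooth_fun u" "smooth_fun f"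
  shows "continuous_on UNIV (PS u f T)"
proof (induction T)
  case Nil then show ?case by (simp add: PS_def[abs_def])
next
  case (Cons p T)
  obtain a b where p: "p = (a,b)" by (cases p)
  have e: "PS u f (p#T) = (\<lambda>x. pdiffs a u x * pdiffs b f x + PS u f T x)" by (simp add: p fun_eq_iff)
  show ?case unfolding e
    by (intro continuous_on_add continuous_on_mult smooth_cont assms Cons)
qed

lemma Rep: "\<exists>T. (\<forall>(a,b)\<in>set T. subseq b ds) \<and>
   (\<forall>u f. smooth_fun u \<longrightarrow> smooth_fun f \<longrightarrow> pdiffs ds (\<lambda>x. u x * f x) = PS u f T)"
proof (induction ds)
  case Nil
  show ?case by (intro exI[of _ "[([],[])]"]) (auto simp: fun_eq_iff)
next
  case (Cons i ds)
  then obtain T where T: "\<forall>(a,b)\<in>set T. subseq b ds"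
    "\<And>u f. smooth_fun u \<Longrightarrow> smooth_fun f \<Longrightarrow> pdiffs ds (\<lambda>x. u x * f x) = PS u f T" by blast
  show ?case
  proof (intro exI[of _ "TT i T"] conjI allI impI)
    show "\<forall>(a, b)\<in>set (TT i T). subseq b (i # ds)"
      using T(1) by (auto simp: TT_def)
  next
    fix u f :: "real^'a \<Rightarrow> real" assume uf: "smooth_fun u" "smooth_fun f"
    show "pdiffs (i # ds) (\<lambda>x. u x * f x) = PS u f (TT i T)"
      using T(2)[OF uf] PS_line[OF uf] by (auto intro!: pdiff_eq)
  qed
qed

lemma smooth_mult:
  assumes "smooth_fun u" "smooth_fun f"
  shows "smooth_fun (\<lambda>x. u x * f x)"
proof (rule smooth_funI)
  fix ds :: "'a list"
  obtain T where "pdiffs ds (\<lambda>x. u x * f x) = PS u f T" using Rep[of ds] assms by blast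
  then show "continuous_on UNIV (pdiffs ds (\<lambda>x. u x * f x))" using PS_cont[OF assms] by simp
next
  fix ds :: "'a list" and i x
  obtain T where T: "pdiffs ds (\<lambda>x. u x * f x) = PS u f T" using Rep[of ds] assms by blast
  then have "pdiffs (i#ds) (\<lambda>x. u x * f x) x = PS u f (TT i T) x"
    using PS_line[OF assms] by (auto intro!: pdiff_eq)
  then show "(lin (pdiffs ds (\<lambda>x. u x * f x)) x i has_real_derivative pdiffs (i # ds) (\<lambda>x. u x * f x) x) (at 0)"
    using T PS_line[OF assms] by simp
qed

lemma scale_line:
  assumes "smooth_fun u"
  shows "(lin (\<lambda>x. c^k * pdiffs a u (c *\<^sub>R x)) x i has_real_derivative c^Suc k * pdiffs (i#a) u (c *\<^sub>R x)) (at 0)"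
proof -
  have h: "(lin (pdiffs a u) (c *\<^sub>R x) i has_real_derivative pdiffs (i#a) u (c *\<^sub>R x)) (at (c * 0))"
    using smooth_has[OF assms] by simp
  have d: "((\<lambda>t. c * t) has_real_derivative c) (at 0)" by (auto intro!: derivative_eq_intros)
  have "((\<lambda>t. c^k * lin (pdiffs a u) (c *\<^sub>R x) i (c * t)) has_real_derivative c^k * (pdiffs (i#a) u (c *\<^sub>R x) * c)) (at 0)"
    by (rule DERIV_cmult, rule DERIV_chain2[OF h d])
  moreover have "(\<lambda>t. c^k * lin (pdiffs a u) (c *\<^sub>R x) i (c * t)) = lin (\<lambda>x. c^k * pdiffs a u (c *\<^sub>R x)) x i"
    by (simp add: scaleR_add_right)
  ultimately show ?thesis by (simp add: algebra_simps)
qed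

lemma scale_derivs:
  assumes "smooth_fun u"
  shows "pdiffs a (\<lambda>x. u (c *\<^sub>R x)) = (\<lambda>x. c^length a * pdiffs a u (c *\<^sub>R x))"
proof (induction a)
  case Nil then show ?case by simp
next
  case (Cons i a)
  show ?case using Cons scale_line[OF assms, of c "length a" a _ i] by (auto intro!: pdiff_eq)
qed

lemma smooth_scale:
  assumes "smooth_fun u"
  shows "smooth_fun (\<lambda>x. u (c *\<^sub>R x))"
proof (rule smooth_funI)
  fix ds :: "'a list"
  show "continuous_on UNIV (pdiffs ds (\<lambda>x. u (c *\<^sub>R x)))"
    unfolding scale_derivs[OF assms]
    by (intro continuous_on_mult continuous_on_const continuous_on_compose2[OF smooth_cont[OF assms]] continuous_intros) auto
next
  fix ds :: "'a list" and i x
  show "(lin (pdiffs ds (\<lambda>x. u (c *\<^sub>R x))) x i has_real_derivative pdiffs (i # ds) (\<lambda>x. u (c *\<^sub>R x)) x) (at 0)"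
    unfolding scale_derivs[OF assms] using scale_line[OF assms] by simp
qed

lemma om_derivs:
  assumes "smooth_fun u"
  shows "pdiffs a (\<lambda>x. 1 - u x) = (if a = [] then (\<lambda>x. 1 - u x) else (\<lambda>x. - pdiffs a u x))"
proof (induction a)
  case Nil then show ?case by simp
next
  case (Cons i a)
  show ?case
  proof (cases "a = []")
    case True
    have "(lin (\<lambda>x. 1 - u x) x i has_real_derivative 0 - pdiffs [i] u x) (at 0)" for x
      using smooth_has[OF assms, of "[]"] by (intro DERIV_diff) auto
    then show ?thesis using True by (auto intro!: pdiff_eq)
  next
    case False
    have "(lin (\<lambda>x. - pdiffs a u x) x i has_real_derivative - pdiffs (i#a) u x) (at 0)" for x
      using smooth_has[OF assms, of a] by (intro DERIV_minus) auto
    then show ?thesis using False Cons by (auto intro!: pdiff_eq)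
  qed
qed

lemma om_line:
  assumes "smooth_fun u"
  shows "(lin (pdiffs a (\<lambda>x. 1 - u x)) x i has_real_derivative - pdiffs (i#a) u x) (at 0)"
proof (cases "a = []")
  case True
  have "(lin (\<lambda>x. 1 - u x) x i has_real_derivative 0 - pdiffs [i] u x) (at 0)"
    using smooth_has[OF assms, of "[]"] by (intro DERIV_diff) auto
  then show ?thesis using True om_derivs[OF assms] by simp
next
  case False
  have "(lin (\<lambda>x. - pdiffs a u x) x i has_real_derivative - pdiffs (i#a) u x) (at 0)"
    using smooth_has[OF assms, of a] by (intro DERIV_minus) auto
  then show ?thesis using False om_derivs[OF assms] by simp
qed

lemma smooth_om:
  assumes "smooth_fun u"
  shows "smooth_fun (\<lambda>x. 1 - u x)"
proof (rule smooth_funI)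
  fix ds :: "'a list"
  show "continuous_on UNIV (pdiffs ds (\<lambda>x. 1 - u x))"
    unfolding om_derivs[OF assms]
    using smooth_cont[OF assms, of ds] smooth_cont[OF assms, of "[]"]
    by (auto intro!: continuous_intros)
next
  fix ds :: "'a list" and i x
  show "(lin (pdiffs ds (\<lambda>x. 1 - u x)) x i has_real_derivative pdiffs (i # ds) (\<lambda>x. 1 - u x) x) (at 0)"
    using om_line[OF assms] om_derivs[OF assms, of "i#ds"] by simp
qed

section \<open>Multi-indices\<close>

definition Lc :: "'n list \<Rightarrow> ('n \<Rightarrow> nat) \<Rightarrow> 'n list" where
  "Lc cs \<mu> = concat (map (\<lambda>i. replicate (\<mu> i) i) cs)"

lemma pdiffs_append: "pdiffs (xs @ ys) f = pdiffs xs (pdiffs ys f)"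
  by (induction xs) auto

lemma pdiffs_replicate: "pdiffs (replicate k i) f = (pdiff i ^^ k) f"
  by (induction k) auto

lemma foldr_Lc: "foldr (\<lambda>i g. (pdiff i ^^ \<mu> i) g) cs f = pdiffs (Lc cs \<mu>) f"
proof (induction cs)
  case Nil then show ?case by (simp add: Lc_def)
next
  case (Cons c cs)
  have "foldr (\<lambda>i g. (pdiff i ^^ \<mu> i) g) (c#cs) f = (pdiff c ^^ \<mu> c) (foldr (\<lambda>i g. (pdiff i ^^ \<mu> i) g) cs f)"
    by simp
  also have "\<dots> = pdiffs (replicate (\<mu> c) c) (pdiffs (Lc cs \<mu>) f)" using Cons by (simp add: pdiffs_replicate)
  also have "\<dots> = pdiffs (Lc (c#cs) \<mu>) f" by (simp add: Lc_def pdiffs_append)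
  finally show ?case .
qed

lemma coord_enum: "distinct (coord_enum :: 'n::finite list) \<and> set (coord_enum :: 'n list) = UNIV"
proof -
  have "\<exists>xs :: 'n list. distinct xs \<and> set xs = UNIV"
    using finite_distinct_list[of "UNIV :: 'n set"] by auto
  then show ?thesis unfolding coord_enum_def by (rule someI_ex)
qed

lemma mderiv_Lc: "mderiv \<mu> f = pdiffs (Lc coord_enum \<mu>) f"
  by (simp add: mderiv_def foldr_Lc)

lemma subseq_Lc: "distinct cs \<Longrightarrow> subseq b (Lc cs \<mu>) \<Longrightarrow> \<exists>\<nu>. (\<forall>i. \<nu> i \<le> \<mu> i) \<and> b = Lc cs \<nu>"
proof (induction cs arbitrary: b)
  case Nil
  have "Lc [] \<mu> = []" by (simp add: Lc_def)
  then have "b = []" using Nil(2) by simp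
  then show ?case by (intro exI[of _ "\<lambda>_. 0"]) (simp add: Lc_def)
next
  case (Cons c cs)
  have "Lc (c#cs) \<mu> = replicate (\<mu> c) c @ Lc cs \<mu>" by (simp add: Lc_def)
  then have "subseq b (replicate (\<mu> c) c @ Lc cs \<mu>)" using Cons.prems(2) by simp
  then obtain b1 b2 where b: "b = b1 @ b2" "subseq b1 (replicate (\<mu> c) c)" "subseq b2 (Lc cs \<mu>)"
    using subseq_append_iff[of b "replicate (\<mu> c) c" "Lc cs \<mu>"] by blast
  from Cons.IH[of b2] Cons.prems(1) b(3) obtain \<nu> where \<nu>: "\<forall>i. \<nu> i \<le> \<mu> i" "b2 = Lc cs \<nu>" using b(3) by auto
  have len: "length b1 \<le> \<mu> c" using list_emb_length[OF b(2)] by simp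
  have "\<forall>y\<in>set b1. y = c"
  proof
    fix y assume "y \<in> set b1"
    then obtain z where "z \<in> set (replicate (\<mu> c) c)" "y = z"
      using list_emb_set[OF b(2)] by blast
    then show "y = c" by simp
  qed
  then have b1: "b1 = replicate (length b1) c" using replicate_length_same by metis
  have "Lc cs (\<nu>(c := length b1)) = Lc cs \<nu>"
  proof -
    have "c \<notin> set cs" using Cons.prems(1) by simp
    then have "map (\<lambda>i. replicate ((\<nu>(c := length b1)) i) i) cs = map (\<lambda>i. replicate (\<nu> i) i) cs"
      unfolding map_eq_conv using \<open>c \<notin> set cs\<close> by auto
    then show ?thesis unfolding Lc_def by (simp only:)
  qed
  then have b': "b = replicate (length b1) c @ Lc cs (\<nu>(c := length b1))"
    using b(1) b1 \<nu>(2) by metis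
  have "Lc (c#cs) (\<nu>(c := length b1)) = replicate (length b1) c @ Lc cs (\<nu>(c := length b1))"
    by (simp add: Lc_def)
  then have "b = Lc (c#cs) (\<nu>(c := length b1))" using b' by simp
  moreover have "\<forall>i. (\<nu>(c := length b1)) i \<le> \<mu> i" using \<nu>(1) len by auto
  ultimately show ?case by blast
qed

lemma mi_order_mono: "(\<forall>i. \<nu> i \<le> \<mu> i) \<Longrightarrow> mi_order \<nu> \<le> mi_order \<mu>"
  unfolding mi_order_def by (intro sum_mono) auto



lemma zero_outside:
  assumes "smooth_fun g" "open U" "\<And>y. y \<in> U \<Longrightarrow> g y = 0" "x \<in> U"
  shows "pdiffs ds g x = 0"
  using assms(4)
proof (induction ds arbitrary: x)
  case Nil then show ?case using assms(3) by simp
next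
  case (Cons i ds)
  let ?S = "(\<lambda>t. x + t *\<^sub>R axis i 1) -` U"
  have "open ?S"
    by (rule continuous_open_vimage[OF assms(2)]) (auto intro!: continuous_intros)
  moreover have "0 \<in> ?S" using Cons.prems by simp
  moreover have "\<And>t. t \<in> ?S \<Longrightarrow> 0 = lin (pdiffs ds g) x i t"
  proof -
    fix t assume "t \<in> ?S"
    then have "x + t *\<^sub>R axis i 1 \<in> U" by simp
    then show "0 = lin (pdiffs ds g) x i t" using Cons.IH by metis
  qed
  moreover have "((\<lambda>_. 0) has_real_derivative 0) (at 0)" by simp
  ultimately have "(lin (pdiffs ds g) x i has_real_derivative 0) (at 0)"
    using has_field_derivative_transform_within_open[where f="\<lambda>_. 0" and S="?S" and g="lin (pdiffs ds g) x i"] by blast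
  then show ?case by (simp add: pdiff_eq)
qed

lemma I_finite: "finite {\<mu>::'n::finite \<Rightarrow> nat. mi_order \<mu> \<le> m}"
proof (rule finite_subset)
  show "{\<mu>::'n \<Rightarrow> nat. mi_order \<mu> \<le> m} \<subseteq> PiE UNIV (\<lambda>_. {..m})"
  proof
    fix \<mu> :: "'n \<Rightarrow> nat" assume "\<mu> \<in> {\<mu>. mi_order \<mu> \<le> m}"
    then have "\<mu> i \<le> m" for i
      unfolding mi_order_def using member_le_sum[of i UNIV \<mu>] by auto
    then show "\<mu> \<in> PiE UNIV (\<lambda>_. {..m})" by (auto simp: PiE_iff)
  qed
  show "finite (PiE (UNIV::'n set) (\<lambda>_. {..m}))" by (intro finite_PiE) auto
qed

lemma test_in_Kp:
  assumes g: "g \<in> test_functions" and M: "defining_family M" and p: "p \<ge> 1"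
  shows "seminorm_pow p (M \<gamma>) m g < \<infinity>"
proof -
  define K where "K = closure {x. g x \<noteq> 0}"
  have sg: "smooth_fun g" and cK: "compact K" using g by (auto simp: test_functions_def K_def)
  have out: "mderiv \<mu> g x = 0" if "x \<notin> K" for \<mu> x
    unfolding mderiv_Lc
  proof (rule zero_outside[OF sg])
    show "open (- K)" using cK by (simp add: compact_imp_closed open_Compl)
    show "g y = 0" if "y \<in> - K" for y
    proof (rule ccontr)
      assume "g y \<noteq> 0"
      then have "y \<in> closure {x. g x \<noteq> 0}" using closure_subset[of "{x. g x \<noteq> 0}"] by auto
      then show False using that K_def by simp
    qed
    show "x \<in> - K" using that by simp
  qed
  have "\<forall>\<gamma> S. bounded S \<longrightarrow> (\<exists>B. \<forall>x\<in>S. M \<gamma> x \<le> B)"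
    using M unfolding defining_family_def by (elim conjE)
  then obtain BW0 where BW0: "\<forall>x\<in>K. M \<gamma> x \<le> BW0"
    using compact_imp_bounded[OF cK] by blast
  define BW where "BW = max BW0 0"
  have BW: "\<forall>x\<in>K. M \<gamma> x \<le> BW" "BW \<ge> 0" using BW0 by (auto simp: BW_def)
  have "\<forall>\<mu>. \<exists>B. \<forall>x\<in>K. \<bar>mderiv \<mu> g x\<bar> \<le> B"
  proof
    fix \<mu>
    have "compact (mderiv \<mu> g ` K)"
      unfolding mderiv_Lc
      by (rule compact_continuous_image[OF continuous_on_subset[OF smooth_cont[OF sg]] cK]) simp
    then have "bounded (mderiv \<mu> g ` K)" by (rule compact_imp_bounded)
    then obtain B where "\<forall>y\<in>mderiv \<mu> g ` K. norm y \<le> B"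
      unfolding bounded_iff by blast
    then show "\<exists>B. \<forall>x\<in>K. \<bar>mderiv \<mu> g x\<bar> \<le> B" by auto
  qed
  then obtain BD where BD: "\<forall>\<mu>. \<forall>x\<in>K. \<bar>mderiv \<mu> g x\<bar> \<le> BD \<mu>"
    using choice[of "\<lambda>\<mu> B. \<forall>x\<in>K. \<bar>mderiv \<mu> g x\<bar> \<le> B"] by blast
  define I where "I = {\<mu>::'a \<Rightarrow> nat. mi_order \<mu> \<le> m}"
  define C where "C = BW powr p * (\<Sum>\<mu>\<in>I. BD \<mu> powr p)"
  have "\<forall>\<gamma> x. 0 \<le> M \<gamma> x" using M unfolding defining_family_def by (elim conjE)
  then have Mnn: "0 \<le> M \<gamma> x" for x by blast
  have le: "ennreal (M \<gamma> x powr p * (\<Sum>\<mu>\<in>I. \<bar>mderiv \<mu> g x\<bar> powr p)) \<le> ennreal C * indicator K x" for x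
  proof (cases "x \<in> K")
    case True
    have "M \<gamma> x powr p \<le> BW powr p" using BW True Mnn p by (intro powr_mono2) auto
    moreover have "(\<Sum>\<mu>\<in>I. \<bar>mderiv \<mu> g x\<bar> powr p) \<le> (\<Sum>\<mu>\<in>I. BD \<mu> powr p)"
      using BD True p by (intro sum_mono powr_mono2) auto
    ultimately have "M \<gamma> x powr p * (\<Sum>\<mu>\<in>I. \<bar>mderiv \<mu> g x\<bar> powr p) \<le> C"
      unfolding C_def by (intro mult_mono) (auto intro: sum_nonneg)
    then show ?thesis using True by (simp add: ennreal_leI)
  next
    case False
    then show ?thesis using out by simp
  qed
  have "seminorm_pow p (M \<gamma>) m g \<le> (\<integral>\<^sup>+ x. ennreal C * indicator K x \<partial>lborel)"
    unfolding seminorm_pow_def I_def[symmetric] by (intro nn_integral_mono le)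
  also have "\<dots> = ennreal C * emeasure lborel K"
    using cK by (intro nn_integral_cmult_indicator) (simp add: compact_imp_closed borel_closed)
  also have "\<dots> < \<infinity>"
    using emeasure_compact_finite[OF cK] by (simp add: ennreal_mult_less_top)
  finally show ?thesis .
qed



definition cn :: "nat \<Rightarrow> real" where "cn n = inverse (real (Suc n))"

definition phi :: "nat \<Rightarrow> real^'n::finite \<Rightarrow> real" where
  "phi n x = 1 - chi (cn n *\<^sub>R x)"

lemma smooth_phi: "smooth_fun (phi n)"
  unfolding phi_def[abs_def] by (intro smooth_om smooth_scale smooth_chi)

lemma phi_derivs: "pdiffs a (phi n) x =
   (if a = [] then 1 - chi (cn n *\<^sub>R x) else - (cn n ^ length a * pdiffs a chi (cn n *\<^sub>R x)))"
proof -
  have "pdiffs a (phi n) = pdiffs a (\<lambda>x. 1 - (\<lambda>y. chi (cn n *\<^sub>R y)) x)" by (simp add: phi_def[abs_def])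
  also have "\<dots> = (if a = [] then (\<lambda>x. 1 - chi (cn n *\<^sub>R x)) else (\<lambda>x. - pdiffs a (\<lambda>y. chi (cn n *\<^sub>R y)) x))"
    by (rule om_derivs[OF smooth_scale[OF smooth_chi]])
  finally show ?thesis using scale_derivs[OF smooth_chi, of a "cn n"] by simp
qed

lemma cn_pos: "0 < cn n" and cn_le1: "cn n \<le> 1"
  by (auto simp: cn_def field_simps)

lemma phi_bound:
  fixes a :: "'n::finite list"
  shows "\<exists>B. \<forall>n (x::real^'n). \<bar>pdiffs a (phi n) x\<bar> \<le> B"
proof -
  obtain B0 where B0: "\<And>x::real^'n. \<bar>pdiffs [] chi x\<bar> \<le> B0" using chi_bounded by blast
  obtain B1 where B1: "\<And>x::real^'n. \<bar>pdiffs a chi x\<bar> \<le> B1" using chi_bounded by blast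
  show ?thesis
  proof (intro exI allI)
    fix n x
    show "\<bar>pdiffs a (phi n) x\<bar> \<le> 1 + \<bar>B0\<bar> + \<bar>B1\<bar>"
    proof (cases "a = []")
      case True
      have "\<bar>chi (cn n *\<^sub>R x)\<bar> \<le> B0" using B0[of "cn n *\<^sub>R x"] by simp
      then show ?thesis using True by (simp add: phi_def)
    next
      case False
      have c: "cn n ^ length a \<le> 1" "0 \<le> cn n ^ length a"
        using cn_pos[of n] cn_le1[of n] by (auto intro: power_le_one)
      have "\<bar>cn n ^ length a * pdiffs a chi (cn n *\<^sub>R x)\<bar> = cn n ^ length a * \<bar>pdiffs a chi (cn n *\<^sub>R x)\<bar>"
        using c by (simp add: abs_mult)
      also have "\<dots> \<le> 1 * B1"
        using c B1[of "cn n *\<^sub>R x"] by (intro mult_mono) auto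
      finally show ?thesis using False by (simp add: phi_derivs)
    qed
  qed
qed

lemma phi_lim: "(\<lambda>n. pdiffs a (phi n) x) \<longlonglongrightarrow> 0"
proof -
  have c: "(\<lambda>n. cn n) \<longlonglongrightarrow> 0" unfolding cn_def by (rule LIMSEQ_inverse_real_of_nat)
  have cx: "(\<lambda>n. cn n *\<^sub>R x) \<longlonglongrightarrow> 0" using tendsto_scaleR[OF c tendsto_const, of x] by simp
  have P: "(\<lambda>n. pdiffs a chi (cn n *\<^sub>R x)) \<longlonglongrightarrow> pdiffs a chi 0"
    by (rule continuous_on_tendsto_compose[OF smooth_cont[OF smooth_chi] cx]) auto
  show ?thesis
  proof (cases "a = []")
    case True
    have "(\<lambda>n. 1 - pdiffs a chi (cn n *\<^sub>R x)) \<longlonglongrightarrow> 1 - pdiffs a chi 0"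
      by (intro tendsto_diff tendsto_const P)
    then show ?thesis using True by (simp add: phi_def chi_0)
  next
    case False
    have "(\<lambda>n. - (cn n ^ length a * pdiffs a chi (cn n *\<^sub>R x))) \<longlonglongrightarrow> - (0 ^ length a * pdiffs a chi 0)"
      by (intro tendsto_minus tendsto_mult tendsto_power c P)
    moreover have "(0::real) ^ length a = 0" using False by simp
    ultimately show ?thesis using False by (simp add: phi_derivs)
  qed
qed

lemma PS_bound:
  assumes "\<forall>(a,b)\<in>set T. \<bar>pdiffs a u x\<bar> \<le> Ba a \<and> \<bar>pdiffs b f x\<bar> \<le> S"
  shows "\<bar>PS u f T x\<bar> \<le> sum_list (map (\<lambda>(a,b). Ba a) T) * S"
  using assms
proof (induction T)
  case Nil then show ?case by simp
next
  case (Cons p T)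
  obtain a b where p: "p = (a,b)" by (cases p)
  have h: "\<bar>pdiffs a u x\<bar> \<le> Ba a" "\<bar>pdiffs b f x\<bar> \<le> S" using Cons.prems p by auto
  have IH: "\<bar>PS u f T x\<bar> \<le> sum_list (map (\<lambda>(a,b). Ba a) T) * S" using Cons by auto
  have "\<bar>pdiffs a u x * pdiffs b f x\<bar> \<le> Ba a * S"
    unfolding abs_mult using h by (intro mult_mono) auto
  then have "\<bar>pdiffs a u x * pdiffs b f x + PS u f T x\<bar> \<le> Ba a * S + sum_list (map (\<lambda>(a,b). Ba a) T) * S"
    using IH by linarith
  then show ?case using p by (simp add: algebra_simps)
qed

lemma PS_tendsto:
  assumes "\<forall>(a,b)\<in>set T. (\<lambda>n. pdiffs a (U n) x) \<longlonglongrightarrow> 0"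
  shows "(\<lambda>n. PS (U n) f T x) \<longlonglongrightarrow> 0"
  using assms
proof (induction T)
  case Nil then show ?case by simp
next
  case (Cons p T)
  obtain a b where p: "p = (a,b)" by (cases p)
  have h: "(\<lambda>n. pdiffs a (U n) x) \<longlonglongrightarrow> 0" using Cons.prems p by auto
  have IH: "(\<lambda>n. PS (U n) f T x) \<longlonglongrightarrow> 0" using Cons by auto
  have "(\<lambda>n. pdiffs a (U n) x * pdiffs b f x + PS (U n) f T x) \<longlonglongrightarrow> 0 * pdiffs b f x + 0"
    by (intro tendsto_add tendsto_mult h IH tendsto_const)
  then show ?case using p by simp
qed

lemma sum_powr_le:
  fixes a :: "'i \<Rightarrow> real"
  assumes "finite I" "I \<noteq> {}" "\<And>i. 0 \<le> a i" "0 \<le> p"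
  shows "(\<Sum>i\<in>I. a i) powr p \<le> real (card I) powr p * (\<Sum>i\<in>I. a i powr p)"
proof -
  define Mx where "Mx = Max (a ` I)"
  have "Mx \<in> a ` I" unfolding Mx_def using assms by (intro Max_in) auto
  then obtain i0 where i0: "i0 \<in> I" "Mx = a i0" by blast
  have "\<And>i. i \<in> I \<Longrightarrow> a i \<le> Mx" unfolding Mx_def using assms by (intro Max_ge) auto
  then have "(\<Sum>i\<in>I. a i) \<le> real (card I) * Mx" using sum_bounded_above by metis
  then have "(\<Sum>i\<in>I. a i) powr p \<le> (real (card I) * Mx) powr p"
    using assms by (intro powr_mono2 sum_nonneg) auto
  also have "\<dots> = real (card I) powr p * Mx powr p" using i0 assms by (simp add: powr_mult)
  also have "Mx powr p \<le> (\<Sum>i\<in>I. a i powr p)"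
    unfolding i0(2) using assms i0 by (intro member_le_sum) auto
  then have "real (card I) powr p * Mx powr p \<le> real (card I) powr p * (\<Sum>i\<in>I. a i powr p)"
    by (intro mult_left_mono) auto
  finally show ?thesis .
qed



lemma main_conv:
  fixes f :: "real^'n::finite \<Rightarrow> real" and W :: "real^'n \<Rightarrow> real"
  assumes f: "smooth_fun f" and Wm: "W \<in> borel_measurable lborel" and Wnn: "\<And>x. 0 \<le> W x"
    and fin: "seminorm_pow p W m f < \<infinity>" and p: "p \<ge> 1"
  shows "(\<lambda>n. seminorm_pow p W m (\<lambda>x. phi n x * f x)) \<longlonglongrightarrow> 0"
proof -
  define I where "I = {\<mu>::'n \<Rightarrow> nat. mi_order \<mu> \<le> m}"
  have finI: "finite I" using I_finite unfolding I_def .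
  have I0: "(\<lambda>_. 0) \<in> I" by (simp add: I_def mi_order_def)
  then have I_ne: "I \<noteq> {}" by blast
  have "\<forall>\<mu>::'n\<Rightarrow>nat. \<exists>T. (\<forall>(a,b)\<in>set T. subseq b (Lc coord_enum \<mu>)) \<and>
     (\<forall>u f. smooth_fun u \<longrightarrow> smooth_fun f \<longrightarrow> pdiffs (Lc coord_enum \<mu>) (\<lambda>x. u x * f x) = PS u f T)"
    by (intro allI Rep)
  from choice[OF this] obtain T where T0: "\<forall>\<mu>::'n\<Rightarrow>nat. (\<forall>(a,b)\<in>set (T \<mu>). subseq b (Lc coord_enum \<mu>)) \<and>
     (\<forall>u f. smooth_fun u \<longrightarrow> smooth_fun f \<longrightarrow> pdiffs (Lc coord_enum \<mu>) (\<lambda>x. u x * f x) = PS u f (T \<mu>))"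
    by blast
  have T1: "\<forall>(a,b)\<in>set (T \<mu>). subseq b (Lc coord_enum \<mu>)" for \<mu>
    using conjunct1[OF spec[OF T0, of \<mu>]] .
  have T2: "pdiffs (Lc coord_enum \<mu>) (\<lambda>x. u x * f x) = PS u f (T \<mu>)" if "smooth_fun u" "smooth_fun f" for \<mu> u f
    using conjunct2[OF spec[OF T0, of \<mu>]] that by blast
  have mder: "mderiv \<mu> (\<lambda>x. phi n x * f x) = PS (phi n) f (T \<mu>)" for \<mu> n
    unfolding mderiv_Lc by (rule T2[OF smooth_phi f])
  define S where "S x = (\<Sum>\<nu>\<in>I. \<bar>mderiv \<nu> f x\<bar>)" for x
  have S_nn: "0 \<le> S x" for x unfolding S_def by (intro sum_nonneg) auto
  have bS: "\<bar>pdiffs b f x\<bar> \<le> S x" if "\<mu> \<in> I" "(a,b) \<in> set (T \<mu>)" for \<mu> a b x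
  proof -
    have "subseq b (Lc coord_enum \<mu>)" using T1[of \<mu>] that(2) by auto
    then obtain \<nu> where \<nu>: "\<forall>i. \<nu> i \<le> \<mu> i" "b = Lc coord_enum \<nu>"
      using subseq_Lc coord_enum by blast
    then have "\<nu> \<in> I" using that(1) mi_order_mono[OF \<nu>(1)] by (simp add: I_def)
    moreover have "pdiffs b f x = mderiv \<nu> f x" using \<nu>(2) by (simp add: mderiv_Lc)
    ultimately show ?thesis unfolding S_def using finI by (auto intro!: member_le_sum)
  qed
  have "\<forall>a::'n list. \<exists>B. \<forall>n (x::real^'n). \<bar>pdiffs a (phi n) x\<bar> \<le> B" using phi_bound by blast
  from choice[OF this] obtain Bp where Bp: "\<forall>a::'n list. \<forall>n (x::real^'n). \<bar>pdiffs a (phi n) x\<bar> \<le> Bp a"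
    by blast
  have Bp_nn: "0 \<le> Bp a" for a using Bp[rule_format, of a 0 0] by linarith
  define K where "K \<mu> = sum_list (map (\<lambda>(a,b). Bp a) (T \<mu>))" for \<mu>
  have K_nn: "0 \<le> K \<mu>" for \<mu> unfolding K_def by (intro sum_list_nonneg) (auto simp: Bp_nn)
  define KK where "KK = (\<Sum>\<mu>\<in>I. K \<mu>)"
  have K_le: "K \<mu> \<le> KK" if "\<mu> \<in> I" for \<mu>
    unfolding KK_def using that finI K_nn by (intro member_le_sum) auto
  have KK_nn: "0 \<le> KK" unfolding KK_def by (intro sum_nonneg K_nn)
  have bound1: "\<bar>mderiv \<mu> (\<lambda>x. phi n x * f x) x\<bar> \<le> KK * S x" if "\<mu> \<in> I" for \<mu> n x
  proof -
    have "\<bar>PS (phi n) f (T \<mu>) x\<bar> \<le> K \<mu> * S x"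
      unfolding K_def by (rule PS_bound) (use Bp bS[OF that] in auto)
    also have "\<dots> \<le> KK * S x" using K_le[OF that] S_nn by (intro mult_right_mono)
    finally show ?thesis using mder by simp
  qed
  define V where "V x = W x powr p * (\<Sum>\<nu>\<in>I. \<bar>mderiv \<nu> f x\<bar> powr p)" for x
  define C where "C = real (card I) * KK powr p * real (card I) powr p"
  define u where "u n x = W x powr p * (\<Sum>\<mu>\<in>I. \<bar>mderiv \<mu> (\<lambda>x. phi n x * f x) x\<bar> powr p)" for n x
  have C_nn: "0 \<le> C" unfolding C_def by simp
  have V_nn: "0 \<le> V x" for x unfolding V_def by (intro mult_nonneg_nonneg sum_nonneg) auto
  have u_nn: "0 \<le> u n x" for n x unfolding u_def by (intro mult_nonneg_nonneg sum_nonneg) auto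
  have u_le: "u n x \<le> C * V x" for n x
  proof -
    have "(\<Sum>\<mu>\<in>I. \<bar>mderiv \<mu> (\<lambda>x. phi n x * f x) x\<bar> powr p) \<le> (\<Sum>\<mu>\<in>I. (KK * S x) powr p)"
      by (intro sum_mono powr_mono2) (use p bound1 in auto)
    also have "\<dots> = real (card I) * (KK powr p * S x powr p)" using KK_nn S_nn by (simp add: powr_mult)
    also have "\<dots> \<le> real (card I) * (KK powr p * (real (card I) powr p * (\<Sum>\<nu>\<in>I. \<bar>mderiv \<nu> f x\<bar> powr p)))"
      using sum_powr_le[OF finI I_ne, of "\<lambda>\<nu>. \<bar>mderiv \<nu> f x\<bar>" p] p unfolding S_def
      by (intro mult_left_mono) auto
    also have "\<dots> = C * (\<Sum>\<nu>\<in>I. \<bar>mderiv \<nu> f x\<bar> powr p)" unfolding C_def by (simp add: algebra_simps)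
    finally have "(\<Sum>\<mu>\<in>I. \<bar>mderiv \<mu> (\<lambda>x. phi n x * f x) x\<bar> powr p) \<le> C * (\<Sum>\<nu>\<in>I. \<bar>mderiv \<nu> f x\<bar> powr p)" .
    then have "W x powr p * (\<Sum>\<mu>\<in>I. \<bar>mderiv \<mu> (\<lambda>x. phi n x * f x) x\<bar> powr p) \<le> W x powr p * (C * (\<Sum>\<nu>\<in>I. \<bar>mderiv \<nu> f x\<bar> powr p))"
      by (intro mult_left_mono) auto
    then show ?thesis unfolding u_def V_def by (simp add: algebra_simps)
  qed
  have mf[measurable]: "mderiv \<nu> f \<in> borel_measurable lborel" for \<nu>
    unfolding mderiv_Lc by (rule smooth_meas[OF f])
  have mg[measurable]: "mderiv \<mu> (\<lambda>x. phi n x * f x) \<in> borel_measurable lborel" for \<mu> n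
    unfolding mderiv_Lc by (rule smooth_meas[OF smooth_mult[OF smooth_phi f]])
  note Wm[measurable]
  have um: "u n \<in> borel_measurable lborel" for n unfolding u_def[abs_def] by measurable
  have Vm: "V \<in> borel_measurable lborel" unfolding V_def[abs_def] by measurable
  have wm: "(\<lambda>x. C * V x) \<in> borel_measurable lborel" using Vm by simp
  have "(\<integral>\<^sup>+x. ennreal (C * V x) \<partial>lborel) = (\<integral>\<^sup>+x. ennreal C * ennreal (V x) \<partial>lborel)"
    using C_nn V_nn by (simp add: ennreal_mult)
  also have "\<dots> = ennreal C * (\<integral>\<^sup>+x. ennreal (V x) \<partial>lborel)"
  proof (intro nn_integral_cmult)
    have "V \<in> borel_measurable borel" using Vm by simp
    then show "(\<lambda>x. ennreal (V x)) \<in> borel_measurable lborel" by simp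
  qed
  also have "(\<integral>\<^sup>+x. ennreal (V x) \<partial>lborel) = seminorm_pow p W m f"
    unfolding seminorm_pow_def V_def I_def ..
  finally have wfin: "(\<integral>\<^sup>+x. ennreal (C * V x) \<partial>lborel) < \<infinity>"
    using fin by (simp add: ennreal_mult_less_top)
  have lim: "(\<lambda>n. u n x) \<longlonglongrightarrow> 0" for x
  proof -
    have l1: "(\<lambda>n. mderiv \<mu> (\<lambda>x. phi n x * f x) x) \<longlonglongrightarrow> 0" for \<mu>
      unfolding mder by (rule PS_tendsto) (use phi_lim in auto)
    have l2: "(\<lambda>n. \<bar>mderiv \<mu> (\<lambda>x. phi n x * f x) x\<bar> powr p) \<longlonglongrightarrow> 0" for \<mu>
      by (rule tendsto_zero_powrI[of _ _ "\<lambda>_. p" p]) (use tendsto_rabs_zero[OF l1] p in auto)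
    have "(\<lambda>n. W x powr p * (\<Sum>\<mu>\<in>I. \<bar>mderiv \<mu> (\<lambda>x. phi n x * f x) x\<bar> powr p)) \<longlonglongrightarrow> 0"
      by (intro tendsto_mult_right_zero tendsto_null_sum l2)
    then show ?thesis unfolding u_def .
  qed
  have "(\<lambda>n. \<integral>\<^sup>+x. norm (0 - u n x) \<partial>lborel) \<longlonglongrightarrow> 0"
  proof (rule nn_integral_dominated_convergence_norm[where w="\<lambda>x. C * V x"])
    show "\<And>j. AE x in lborel. norm (u j x) \<le> C * V x" using u_le u_nn by simp
  qed (use um wm wfin lim in auto)
  moreover have "(\<integral>\<^sup>+x. norm (0 - u n x) \<partial>lborel) = seminorm_pow p W m (\<lambda>x. phi n x * f x)" for n
    unfolding seminorm_pow_def I_def[symmetric] u_def[symmetric]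
    by (intro nn_integral_cong) (simp add: u_nn)
  ultimately show ?thesis by simp
qed



lemma gn_test:
  fixes f :: "real^'n::finite \<Rightarrow> real"
  assumes sf: "smooth_fun f"
  shows "(\<lambda>x. chi (cn n *\<^sub>R x) * f x) \<in> test_functions"
proof -
  have sm: "smooth_fun (\<lambda>x. chi (cn n *\<^sub>R x) * f x)"
    using smooth_mult[OF smooth_scale[OF smooth_chi] sf] by simp
  have "bounded {x. chi (cn n *\<^sub>R x) * f x \<noteq> 0}"
    unfolding bounded_iff
  proof (intro exI ballI)
    fix x :: "real^'n" assume "x \<in> {x. chi (cn n *\<^sub>R x) * f x \<noteq> 0}"
    then have c: "chi (cn n *\<^sub>R x) \<noteq> 0" by simp
    have "\<bar>x $ j\<bar> \<le> real (Suc n)" for j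
    proof -
      have "\<bar>cn n * x $ j\<bar> < 1" using chi_support[OF c, of j] by simp
      then have "\<bar>x $ j\<bar> / real (Suc n) < 1" by (simp add: cn_def abs_mult divide_inverse mult.commute)
      then show ?thesis by (simp add: field_simps)
    qed
    then have "(\<Sum>j\<in>UNIV. \<bar>x $ j\<bar>) \<le> real (card (UNIV::'n set)) * real (Suc n)"
      by (intro sum_bounded_above) auto
    then show "norm x \<le> real (card (UNIV::'n set)) * real (Suc n)"
      using norm_le_l1_cart[of x] by linarith
  qed
  then have "compact (closure {x. chi (cn n *\<^sub>R x) * f x \<noteq> 0})" by simp
  then show ?thesis using sm unfolding test_functions_def by simp
qed

theorem lemma3p2:
  fixes M :: "'g \<Rightarrow> real^'n::finite \<Rightarrow> real" and p :: real
  assumes "defining_family M" and "p \<ge> 1"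
  shows "test_functions \<subseteq> Kp p M \<and>
    (\<forall>f\<in>Kp p M. \<forall>F. finite F \<longrightarrow> (\<forall>\<epsilon>>0. \<exists>g\<in>test_functions.
        \<forall>(\<gamma>, m)\<in>F. Kseminorm p (M \<gamma>) m (\<lambda>x. f x - g x) < \<epsilon>))"
proof (intro conjI)
  show "test_functions \<subseteq> Kp p M"
  proof
    fix g :: "real^'n \<Rightarrow> real" assume g: "g \<in> test_functions"
    then have "smooth_fun g" by (simp add: test_functions_def)
    moreover have "\<forall>\<gamma> m. seminorm_pow p (M \<gamma>) m g < \<infinity>"
      using test_in_Kp[OF g assms] by simp
    ultimately show "g \<in> Kp p M" by (simp add: Kp_def)
  qed
next
  have Mm: "\<forall>\<gamma>. M \<gamma> \<in> borel_measurable lborel" using assms(1) unfolding defining_family_def by (elim conjE)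
  have Mnn: "\<forall>\<gamma> x. 0 \<le> M \<gamma> x" using assms(1) unfolding defining_family_def by (elim conjE)
  show "\<forall>f\<in>Kp p M. \<forall>F. finite F \<longrightarrow> (\<forall>\<epsilon>>0. \<exists>g\<in>test_functions.
        \<forall>(\<gamma>, m)\<in>F. Kseminorm p (M \<gamma>) m (\<lambda>x. f x - g x) < \<epsilon>)"
  proof (intro ballI allI impI)
    fix f :: "real^'n \<Rightarrow> real" and F :: "('g \<times> nat) set" and \<epsilon> :: real
    assume f: "f \<in> Kp p M" and F: "finite F" and e: "\<epsilon> > 0"
    have sf: "smooth_fun f" and finf: "\<And>\<gamma> m. seminorm_pow p (M \<gamma>) m f < \<infinity>"
      using f by (auto simp: Kp_def)
    define gn where "gn n x = chi (cn n *\<^sub>R x) * f x" for n x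
    have eq: "(\<lambda>x. f x - gn n x) = (\<lambda>x. phi n x * f x)" for n
      by (simp add: gn_def phi_def fun_eq_iff algebra_simps)
    have conv: "(\<lambda>n. Kseminorm p (M \<gamma>) m (\<lambda>x. f x - gn n x)) \<longlonglongrightarrow> 0" for \<gamma> m
    proof -
      have s: "(\<lambda>n. seminorm_pow p (M \<gamma>) m (\<lambda>x. phi n x * f x)) \<longlonglongrightarrow> 0"
        by (rule main_conv[OF sf]) (use Mm Mnn finf assms(2) in auto)
      then have "(\<lambda>n. seminorm_pow p (M \<gamma>) m (\<lambda>x. phi n x * f x)) \<longlonglongrightarrow> ennreal 0" by simp
      then have "(\<lambda>n. enn2real (seminorm_pow p (M \<gamma>) m (\<lambda>x. phi n x * f x))) \<longlonglongrightarrow> 0"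
        by (rule tendsto_enn2real) simp
      then have "(\<lambda>n. enn2real (seminorm_pow p (M \<gamma>) m (\<lambda>x. phi n x * f x)) powr (1/p)) \<longlonglongrightarrow> 0"
        by (rule tendsto_zero_powrI[of _ _ "\<lambda>_. 1/p" "1/p"]) (use assms(2) in auto)
      then show ?thesis unfolding Kseminorm_def eq .
    qed
    have "\<forall>\<^sub>F n in sequentially. \<forall>y\<in>F. (case y of (\<gamma>, m) \<Rightarrow> Kseminorm p (M \<gamma>) m (\<lambda>x. f x - gn n x) < \<epsilon>)"
    proof (rule eventually_ball_finite[OF F], rule ballI)
      fix y assume "y \<in> F"
      obtain \<gamma> m where y: "y = (\<gamma>, m)" by (cases y)
      show "\<forall>\<^sub>F n in sequentially. (case y of (\<gamma>, m) \<Rightarrow> Kseminorm p (M \<gamma>) m (\<lambda>x. f x - gn n x) < \<epsilon>)"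
        unfolding y using order_tendstoD(2)[OF conv e] by simp
    qed
    then obtain N where N: "\<And>n. n \<ge> N \<Longrightarrow> \<forall>y\<in>F. (case y of (\<gamma>, m) \<Rightarrow> Kseminorm p (M \<gamma>) m (\<lambda>x. f x - gn n x) < \<epsilon>)"
      unfolding eventually_sequentially by blast
    define n where "n = N"
    have n: "\<forall>y\<in>F. (case y of (\<gamma>, m) \<Rightarrow> Kseminorm p (M \<gamma>) m (\<lambda>x. f x - gn n x) < \<epsilon>)"
      using N[of n] unfolding n_def by simp
    have gt: "gn n \<in> test_functions" unfolding gn_def[abs_def] by (rule gn_test[OF sf])
    show "\<exists>g\<in>test_functions. \<forall>(\<gamma>, m)\<in>F. Kseminorm p (M \<gamma>) m (\<lambda>x. f x - g x) < \<epsilon>"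
    proof (rule bexI[of _ "gn n"])
      show "\<forall>(\<gamma>, m)\<in>F. Kseminorm p (M \<gamma>) m (\<lambda>x. f x - gn n x) < \<epsilon>" using n by simp
    qed (rule gt)
  qed
qed


end
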